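(* Let $E_1|H_1$, $E_2|H_2$, $E_3|H_3$ be conditional events such that $\{E_1|H_1,E_2|H_2\}$ is p-consistent. Then $\{E_1|H_1,E_2|H_2\}$ p-entails $E_3|H_3$ if and only if $(E_3|H_3)\,|\,\big((E_1|H_1)\wedge(E_2|H_2)\big)=1$. *)

theory Defs
  imports Main "HOL.Real"
begin

text \<open>A conditional random quantity in a prevision assessment is a
  triple (X, H, m): X gives its values on the conditioning event H, m is its assessed
  prevision. Coherence (betting scheme): for every nonempty finite subfamily J and all
  real stakes s, the random gain G = sum over j in J of s_j * H_j * (X_j - m_j),
  restricted to the union of the conditioning events of J, takes both a value <= 0 and
  a value >= 0 (i.e. min G <= 0 <= max G).\<close>

definition coherent :: "(('w \<Rightarrow> real) \<times> 'w set \<times> real) list \<Rightarrow> bool" where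
  "coherent F \<longleftrightarrow>
     (\<forall>J \<subseteq> {..<length F}. J \<noteq> {} \<longrightarrow>
       (\<forall>s :: nat \<Rightarrow> real.
          let G = (\<lambda>w. \<Sum>j\<in>J. s j *
                     (if w \<in> fst (snd (F ! j)) then fst (F ! j) w - snd (snd (F ! j)) else 0));
              H0 = (\<Union>j\<in>J. fst (snd (F ! j)))
          in (\<exists>w\<in>H0. G w \<le> 0) \<and> (\<exists>w\<in>H0. G w \<ge> 0)))"

definition ind :: "'w set \<Rightarrow> 'w \<Rightarrow> real" where
  "ind E w = (if w \<in> E then 1 else 0)"

definition cev :: "'w set \<Rightarrow> 'w set \<Rightarrow> real \<Rightarrow> ('w \<Rightarrow> real) \<times> 'w set \<times> real" where
  "cev E H p = (ind E, H, p)"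

definition p_consistent :: "('w set \<times> 'w set) list \<Rightarrow> bool" where
  "p_consistent F \<longleftrightarrow> coherent (map (\<lambda>(E, H). cev E H 1) F)"

definition p_entails :: "('w set \<times> 'w set) list \<Rightarrow> 'w set \<times> 'w set \<Rightarrow> bool" where
  "p_entails F C \<longleftrightarrow> p_consistent F \<and>
     (\<forall>z. coherent (map (\<lambda>(E, H). cev E H 1) F @ [cev (fst C) (snd C) z]) \<longrightarrow> z = 1)"

text \<open>Conjunction of the conditional events E_i|H_i, i in S (Gilio--Sanfilippo), as a
  random quantity: 0 if some E_i|H_i is false; 1 if all are true; x T if exactly the
  E_i|H_i with i in T (T nonempty) are void and the others true, where x T is the
  assessed prevision of the conjunction over T (x {i} = P(E_i|H_i)).\<close>
definition conj_val :: "(nat \<Rightarrow> 'w set) \<Rightarrow> (nat \<Rightarrow> 'w set) \<Rightarrow> (nat set \<Rightarrow> real) \<Rightarrow> nat set \<Rightarrow> 'w \<Rightarrow> real" where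
  "conj_val E H x S w =
     (if \<exists>i\<in>S. w \<in> H i \<and> w \<notin> E i then 0
      else if {i\<in>S. w \<notin> H i} = {} then 1 else x {i\<in>S. w \<notin> H i})"

definition conj_rq :: "(nat \<Rightarrow> 'w set) \<Rightarrow> (nat \<Rightarrow> 'w set) \<Rightarrow> (nat set \<Rightarrow> real) \<Rightarrow> nat set
    \<Rightarrow> ('w \<Rightarrow> real) \<times> 'w set \<times> real" where
  "conj_rq E H x S = (conj_val E H x S, (\<Union>i\<in>S. H i), x S)"

definition iter_val :: "(nat \<Rightarrow> 'w set) \<Rightarrow> (nat \<Rightarrow> 'w set) \<Rightarrow> (nat set \<Rightarrow> real) \<Rightarrow> real \<Rightarrow> 'w \<Rightarrow> real" where
  "iter_val E H x \<mu> w = conj_val E H x {1,2,3} w + \<mu> * (1 - conj_val E H x {1,2} w)"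

text \<open>The bet on the iterated conditional is called off where the conditioning conjunction
  C12 is 0 (there iter_val - mu = C123 - mu*C12 vanishes).\<close>
definition iter_rq :: "(nat \<Rightarrow> 'w set) \<Rightarrow> (nat \<Rightarrow> 'w set) \<Rightarrow> (nat set \<Rightarrow> real) \<Rightarrow> real
    \<Rightarrow> ('w \<Rightarrow> real) \<times> 'w set \<times> real" where
  "iter_rq E H x \<mu> = (iter_val E H x \<mu>, {w. conj_val E H x {1,2} w \<noteq> 0}, \<mu>)"

definition iter_family :: "(nat \<Rightarrow> 'w set) \<Rightarrow> (nat \<Rightarrow> 'w set) \<Rightarrow> (nat set \<Rightarrow> real) \<Rightarrow> real
    \<Rightarrow> (('w \<Rightarrow> real) \<times> 'w set \<times> real) list" where
  "iter_family E H x \<mu> =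
     [conj_rq E H x {1}, conj_rq E H x {2}, conj_rq E H x {3},
      conj_rq E H x {1,2}, conj_rq E H x {1,3}, conj_rq E H x {2,3},
      conj_rq E H x {1,2,3}, iter_rq E H x \<mu>]"

text \<open>"(E3|H3)|((E1|H1) \<and> (E2|H2)) = 1": for every coherent prevision assessment under which
  the iterated conditional is defined (C12 not constantly 0), it is the constant 1.\<close>
definition iter_cond_eq_one :: "(nat \<Rightarrow> 'w set) \<Rightarrow> (nat \<Rightarrow> 'w set) \<Rightarrow> bool" where
  "iter_cond_eq_one E H \<longleftrightarrow>
     (\<forall>x \<mu>. coherent (iter_family E H x \<mu>) \<and> (\<exists>w. conj_val E H x {1,2} w \<noteq> 0)
        \<longrightarrow> (\<forall>w. iter_val E H x \<mu> w = 1))"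

end

theory Submission imports Defs begin

fun fhit :: "'w list \<Rightarrow> 'w set \<Rightarrow> ('w \<Rightarrow> real) \<Rightarrow> real \<Rightarrow> bool" where
  "fhit [] A X m = False"
| "fhit (w#ws) A X m = (if w \<in> A then X w = m else fhit ws A X m)"

lemma fhit_zero:
  assumes "J \<noteq> {}" "\<forall>j\<in>J. fhit ws (A j) (X j) (m j)"
  shows "\<exists>w\<in>(\<Union>j\<in>J. A j). (\<Sum>j\<in>J. s j * (if w \<in> A j then X j w - m j else 0)) = 0"
  using assms(2)
proof (induction ws)
  case Nil then show ?case using assms(1) by auto
next
  case (Cons w ws)
  show ?case
  proof (cases "w \<in> (\<Union>j\<in>J. A j)")
    case True
    have "(\<Sum>j\<in>J. s j * (if w \<in> A j then X j w - m j else 0)) = 0"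
      using Cons.prems by (intro sum.neutral) auto
    with True show ?thesis by blast
  next
    case False
    then have "\<forall>j\<in>J. fhit ws (A j) (X j) (m j)" using Cons.prems by auto
    then show ?thesis using Cons.IH by blast
  qed
qed

lemma coherent_fhit:
  assumes "\<forall>X\<in>set F. fhit ws (fst (snd X)) (fst X) (snd (snd X))"
  shows "coherent F"
  unfolding coherent_def Let_def
proof (intro allI impI)
  fix J :: "nat set" and s :: "nat \<Rightarrow> real"
  assume J: "J \<subseteq> {..<length F}" "J \<noteq> {}"
  have "\<forall>j\<in>J. fhit ws (fst (snd (F!j))) (fst (F!j)) (snd (snd (F!j)))"
    using assms J(1) by (auto simp: nth_mem subset_iff)
  from fhit_zero[OF J(2) this, of s] obtain w where w1:
    "w \<in> (\<Union>j\<in>J. fst (snd (F!j)))"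
    and w2: "(\<Sum>j\<in>J. s j * (if w \<in> fst (snd (F!j)) then fst (F!j) w - snd (snd (F!j)) else 0)) = 0"
    by blast
  show "(\<exists>w\<in>\<Union>j\<in>J. fst (snd (F ! j)).
           (\<Sum>j\<in>J. s j * (if w \<in> fst (snd (F ! j)) then fst (F ! j) w - snd (snd (F ! j)) else 0)) \<le> 0) \<and>
       (\<exists>w\<in>\<Union>j\<in>J. fst (snd (F ! j)).
           0 \<le> (\<Sum>j\<in>J. s j * (if w \<in> fst (snd (F ! j)) then fst (F ! j) w - snd (snd (F ! j)) else 0)))"
    by (intro conjI bexI[of _ w]) (simp_all only: w2 order_refl w1)
qed

lemma coh_ex:
  assumes "coherent F" "J \<subseteq> {..<length F}" "J \<noteq> {}"
  shows "\<exists>w\<in>(\<Union>j\<in>J. fst (snd (F!j))). 0 \<le> (\<Sum>j\<in>J. s j * (if w \<in> fst (snd (F!j)) then fst (F!j) w - snd (snd (F!j)) else 0))"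
  using assms unfolding coherent_def Let_def by blast

lemma bet1:
  assumes "coherent F" "a < length F" "F!a = (X, A, m)"
  shows "\<exists>w\<in>A. m \<le> X w" "\<exists>w\<in>A. X w \<le> m"
proof -
  from coh_ex[OF assms(1), of "{a}" "\<lambda>_. 1"] assms(2,3)
  show "\<exists>w\<in>A. m \<le> X w" by auto
  from coh_ex[OF assms(1), of "{a}" "\<lambda>_. -1"] assms(2,3)
  show "\<exists>w\<in>A. X w \<le> m" by auto
qed

lemma bet2:
  assumes "coherent F" "a < length F" "b < length F" "a \<noteq> b" "F!a = (X, A, ma)" "F!b = (Y, B, mb)"
  shows "\<exists>w\<in>A \<union> B. 0 \<le> (if w \<in> A then X w - ma else 0) - (if w \<in> B then Y w - mb else 0)"
proof -
  obtain w where w: "w \<in> (\<Union>j\<in>{a,b}. fst (snd (F!j)))"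
    "0 \<le> (\<Sum>j\<in>{a,b}. (if j = a then 1 else -1) * (if w \<in> fst (snd (F!j)) then fst (F!j) w - snd (snd (F!j)) else 0))"
    using coh_ex[OF assms(1), of "{a,b}" "\<lambda>j. if j = a then 1 else -1"] assms(2,3) by blast
  have mem: "w \<in> A \<union> B" using w(1) assms(5,6) by auto
  have eq: "(\<Sum>j\<in>{a,b}. (if j = a then 1 else -1) * (if w \<in> fst (snd (F!j)) then fst (F!j) w - snd (snd (F!j)) else 0))
     = (if w \<in> A then X w - ma else 0) - (if w \<in> B then Y w - mb else 0)"
  proof -
    let ?g = "\<lambda>j. (if j = a then 1 else -1) * (if w \<in> fst (snd (F!j)) then fst (F!j) w - snd (snd (F!j)) else (0::real))"
    have ga: "?g a = (if w \<in> A then X w - ma else 0)" using assms(5) by simp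
    have gb: "?g b = - (if w \<in> B then Y w - mb else 0)" using assms(4,6) by simp
    have "sum ?g {a,b} = ?g a + ?g b" using assms(4) by simp
    then show ?thesis using ga gb by linarith
  qed
  have "0 \<le> (\<Sum>j\<in>{a,b}. (if j = a then 1 else -1) * (if w \<in> fst (snd (F!j)) then fst (F!j) w - snd (snd (F!j)) else 0))" by (fact w(2))
  then have pos: "0 \<le> (if w \<in> A then X w - ma else 0) - (if w \<in> B then Y w - mb else 0)"
    by (simp only: eq)
  show ?thesis by (rule bexI[of _ w]) (fact pos, fact mem)
qed

lemma bet2eq:
  assumes "coherent F" "a < length F" "b < length F" "a \<noteq> b" "F!a = (X, A, ma)" "F!b = (Y, B, mb)"
    and "\<forall>w\<in>A. w \<in> B \<and> X w = Y w" "\<forall>w\<in>B - A. Y w = ma"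
  shows "ma = mb"
proof -
  obtain w where w: "w \<in> A \<union> B" "0 \<le> (if w \<in> A then X w - ma else 0) - (if w \<in> B then Y w - mb else 0)"
    using bet2[OF assms(1-6)] by blast
  have "(if w \<in> A then X w - ma else 0) - (if w \<in> B then Y w - mb else 0) = mb - ma"
    using w(1) assms(7,8) by auto
  with w(2) have 1: "0 \<le> mb - ma" by simp
  obtain v where v: "v \<in> B \<union> A" "0 \<le> (if v \<in> B then Y v - mb else 0) - (if v \<in> A then X v - ma else 0)"
    using bet2[OF assms(1,3,2) _ assms(6,5)] assms(4) by metis
  have "(if v \<in> B then Y v - mb else 0) - (if v \<in> A then X v - ma else 0) = ma - mb"
    using v(1) assms(7,8) by auto
  with v(2) have 2: "0 \<le> ma - mb" by simp
  from 1 2 show ?thesis by simp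
qed

lemma sum3: "a \<noteq> b \<Longrightarrow> a \<noteq> c \<Longrightarrow> b \<noteq> c \<Longrightarrow> sum g {a,b,c} = g a + g b + g c"
  by (simp add: algebra_simps)

lemma bet3:
  assumes "coherent F" "a < length F" "b < length F" "c < length F" "a \<noteq> b" "a \<noteq> c" "b \<noteq> c"
    "F!a = (X, A, ma)" "F!b = (Y, B, mb)" "F!c = (Z, C, mc)"
  shows "\<exists>w\<in>A \<union> B \<union> C. 0 \<le> (if w \<in> A then X w - ma else 0) + (if w \<in> B then Y w - mb else 0) - (if w \<in> C then Z w - mc else 0)"
proof -
  obtain w where w: "w \<in> (\<Union>j\<in>{a,b,c}. fst (snd (F!j)))"
    "0 \<le> (\<Sum>j\<in>{a,b,c}. (if j = c then -1 else 1) * (if w \<in> fst (snd (F!j)) then fst (F!j) w - snd (snd (F!j)) else 0))"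
    using coh_ex[OF assms(1), of "{a,b,c}" "\<lambda>j. if j = c then -1 else 1"] assms(2,3,4) by blast
  have mem: "w \<in> A \<union> B \<union> C" using w(1) assms(8-10) by auto
  have eq: "(\<Sum>j\<in>{a,b,c}. (if j = c then -1 else 1) * (if w \<in> fst (snd (F!j)) then fst (F!j) w - snd (snd (F!j)) else 0))
     = (if w \<in> A then X w - ma else 0) + (if w \<in> B then Y w - mb else 0) - (if w \<in> C then Z w - mc else 0)"
  proof -
    let ?g = "\<lambda>j. (if j = c then -1 else 1) * (if w \<in> fst (snd (F!j)) then fst (F!j) w - snd (snd (F!j)) else (0::real))"
    have ga: "?g a = (if w \<in> A then X w - ma else 0)" using assms(6,8) by simp
    have gb: "?g b = (if w \<in> B then Y w - mb else 0)" using assms(7,9) by simp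
    have gc: "?g c = - (if w \<in> C then Z w - mc else 0)" using assms(10) by simp
    show ?thesis using sum3[OF assms(5-7), of ?g] ga gb gc by linarith
  qed
  have "0 \<le> (\<Sum>j\<in>{a,b,c}. (if j = c then -1 else 1) * (if w \<in> fst (snd (F!j)) then fst (F!j) w - snd (snd (F!j)) else 0))" by (fact w(2))
  then have pos: "0 \<le> (if w \<in> A then X w - ma else 0) + (if w \<in> B then Y w - mb else 0) - (if w \<in> C then Z w - mc else 0)"
    by (simp only: eq)
  show ?thesis by (rule bexI[of _ w]) (fact pos, fact mem)
qed

lemma vs: "{i\<in>insert (a::nat) S. w \<notin> H i} = (if w \<in> H a then {i\<in>S. w \<notin> H i} else insert a {i\<in>S. w \<notin> H i})"
  "{i\<in>{}. w \<notin> H i} = {}" by auto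
lemma bx: "(\<exists>i\<in>insert (a::nat) S. P i) = (P a \<or> (\<exists>i\<in>S. P i))" "(\<exists>i\<in>{}. P i) = False" by auto
lemma cv: "conj_val E H x S w = (if \<exists>i\<in>S. w \<in> H i \<and> w \<notin> E i then 0
      else if {i\<in>S. w \<notin> H i} = {} then 1 else x {i\<in>S. w \<notin> H i})" by (simp add: conj_val_def)

definition x0 :: "nat set \<Rightarrow> real" where "x0 T = (if 3 \<in> T then 0 else 1)"

lemma caseA1:
  assumes w: "w\<in>H 3" "w\<notin>E 3" "w\<in>H 1\<longrightarrow>w\<in>E 1" "w\<in>H 2\<longrightarrow>w\<in>E 2"
    and g: "g\<in>H 2" "g \<in> E 2" "g\<in>H 1\<longrightarrow>g\<in>E 1" and ta: "ta\<in>H 1" "ta\<in>E 1"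
  shows "\<forall>X\<in>set (iter_family E H x0 0). fhit [w,g,ta] (fst (snd X)) (fst X) (snd (snd X))"
  using assms by (auto simp: iter_family_def conj_rq_def iter_rq_def iter_val_def x0_def cv vs bx)


lemma caseA2:
  assumes w: "w\<in>H 3" "w\<notin>E 3" "w\<in>H 1\<longrightarrow>w\<in>E 1" "w\<in>H 2\<longrightarrow>w\<in>E 2"
    and g: "g\<notin>H 2" "g\<in>H 1" "g \<in> E 1" and tb: "tb\<in>H 2" "tb\<in>E 2"
  shows "\<forall>X\<in>set (iter_family E H x0 0). fhit [w,g,tb] (fst (snd X)) (fst X) (snd (snd X))"
  using assms by (auto simp: iter_family_def conj_rq_def iter_rq_def iter_val_def x0_def cv vs bx)

lemma caseB1:
  assumes w: "w\<in>H 1" "w\<in>E 1" "w\<in>H 2" "w\<in>E 2" "w\<notin>H 3" and f: "f\<in>H 3" "f\<notin>E 3"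
  shows "\<forall>X\<in>set (iter_family E H x0 0). fhit [w,f] (fst (snd X)) (fst X) (snd (snd X))"
  using assms by (auto simp: iter_family_def conj_rq_def iter_rq_def iter_val_def x0_def cv vs bx)

lemma caseB2a:
  assumes w: "w\<in>H 1" "w\<in>E 1" "w\<notin>H 2" "w\<notin>H 3" and u: "u\<in>H 2" "u\<in>E 2" "u\<notin>H 3"
   and f: "f\<in>H 3" "f\<notin>E 3"
  shows "\<forall>X\<in>set (iter_family E H x0 0). fhit [w,u,f] (fst (snd X)) (fst X) (snd (snd X))"
  using assms by (auto simp: iter_family_def conj_rq_def iter_rq_def iter_val_def x0_def cv vs bx)

lemma caseB2b:
  assumes w: "w\<in>H 1" "w\<in>E 1" "w\<notin>H 2" "w\<notin>H 3" and u: "u\<in>H 3" "u\<notin>E 3" "u\<in>H 2 \<longrightarrow> u\<in>E 2"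
   and tb: "tb\<in>H 2" "tb\<in>E 2"
  shows "\<forall>X\<in>set (iter_family E H x0 0). fhit [w,u,tb] (fst (snd X)) (fst X) (snd (snd X))"
  using assms by (auto simp: iter_family_def conj_rq_def iter_rq_def iter_val_def x0_def cv vs bx)

lemma caseB3a:
  assumes w: "w\<in>H 2" "w\<in>E 2" "w\<notin>H 1" "w\<notin>H 3" and u: "u\<in>H 1" "u\<in>E 1" "u\<notin>H 3"
   and f: "f\<in>H 3" "f\<notin>E 3"
  shows "\<forall>X\<in>set (iter_family E H x0 0). fhit [w,u,f] (fst (snd X)) (fst X) (snd (snd X))"
  using assms by (auto simp: iter_family_def conj_rq_def iter_rq_def iter_val_def x0_def cv vs bx)

lemma caseB3b:
  assumes w: "w\<in>H 2" "w\<in>E 2" "w\<notin>H 1" "w\<notin>H 3" and u: "u\<in>H 3" "u\<notin>E 3" "u\<in>H 1 \<longrightarrow> u\<in>E 1"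
   and ta: "ta\<in>H 1" "ta\<in>E 1"
  shows "\<forall>X\<in>set (iter_family E H x0 0). fhit [w,u,ta] (fst (snd X)) (fst X) (snd (snd X))"
  using assms by (auto simp: iter_family_def conj_rq_def iter_rq_def iter_val_def x0_def cv vs bx)

lemma fhit_cong: "(\<forall>w\<in>A. X w = Y w) \<Longrightarrow> fhit ws A X m = fhit ws A Y m"
  by (induction ws) auto

lemma cev_from_iter:
  assumes "\<forall>X\<in>set (iter_family E H x0 0). fhit ws (fst (snd X)) (fst X) (snd (snd X))"
  shows "\<forall>X\<in>set [cev (E 1) (H 1) 1, cev (E 2) (H 2) 1, cev (E 3) (H 3) 0]. fhit ws (fst (snd X)) (fst X) (snd (snd X))"
proof -
  have a: "fhit ws (H i) (conj_val E H x0 {i}) (x0 {i})" if "i \<in> {1,2,3}" for i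
    using assms that by (auto simp: iter_family_def conj_rq_def)
  have b: "\<forall>w\<in>H i. conj_val E H x0 {i} w = ind (E i) w" for i
    by (auto simp: cv vs bx ind_def)
  show ?thesis using a[of 1] a[of 2] a[of 3] fhit_cong[OF b[of 1]] fhit_cong[OF b[of 2]] fhit_cong[OF b[of 3]]
    by (simp add: cev_def x0_def)
qed

lemma constr:
  fixes E H :: "nat \<Rightarrow> 'w set"
  assumes h1: "\<forall>X\<in>set (iter_family E H x0 0). fhit ws (fst (snd X)) (fst X) (snd (snd X))"
    and g: "g\<in>H 1 \<union> H 2" "g\<in>H 1 \<longrightarrow> g\<in>E 1" "g\<in>H 2\<longrightarrow>g\<in>E 2" and f: "f\<in>H 3" "f\<notin>E 3"
  shows "\<not> p_entails [(E 1, H 1), (E 2, H 2)] (E 3, H 3) \<and> \<not> iter_cond_eq_one E H"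
proof
  have c1: "coherent (iter_family E H x0 0)" by (rule coherent_fhit[OF h1])
  have c2: "coherent [cev (E 1) (H 1) 1, cev (E 2) (H 2) 1, cev (E 3) (H 3) 0]"
    by (rule coherent_fhit[OF cev_from_iter[OF h1]])
  show "\<not> p_entails [(E 1, H 1), (E 2, H 2)] (E 3, H 3)"
    using c2 unfolding p_entails_def by auto
  have "conj_val E H x0 {1,2} g \<noteq> 0" using g by (auto simp: cv vs bx x0_def)
  moreover have "iter_val E H x0 0 f \<noteq> 1" using f by (auto simp: iter_val_def cv vs bx x0_def)
  ultimately show "\<not> iter_cond_eq_one E H"
    using c1 unfolding iter_cond_eq_one_def by blast
qed


lemma ifn:
  "iter_family E H x \<mu> ! 0 = (conj_val E H x {1}, H 1, x {1})"
  "iter_family E H x \<mu> ! 1 = (conj_val E H x {2}, H 2, x {2})"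
  "iter_family E H x \<mu> ! 2 = (conj_val E H x {3}, H 3, x {3})"
  "iter_family E H x \<mu> ! 3 = (conj_val E H x {1,2}, H 1 \<union> H 2, x {1,2})"
  "iter_family E H x \<mu> ! 4 = (conj_val E H x {1,3}, H 1 \<union> H 3, x {1,3})"
  "iter_family E H x \<mu> ! 5 = (conj_val E H x {2,3}, H 2 \<union> H 3, x {2,3})"
  "iter_family E H x \<mu> ! 6 = (conj_val E H x {1,2,3}, H 1 \<union> H 2 \<union> H 3, x {1,2,3})"
  "iter_family E H x \<mu> ! 7 = (iter_val E H x \<mu>, {w. conj_val E H x {1,2} w \<noteq> 0}, \<mu>)"
  "length (iter_family E H x \<mu>) = 8"
  by (auto simp: iter_family_def conj_rq_def iter_rq_def)

lemma pw4:
  assumes K4: "\<forall>w. ((w\<in>H 1 \<or> w\<in>H 2) \<and> (w\<in>H 1 \<longrightarrow> w\<in>E 1) \<and> (w\<in>H 2 \<longrightarrow> w\<in>E 2) \<longrightarrow> w\<in>H 3 \<and> w\<in>E 3)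
      \<and> (w\<in>H 3 \<and> w\<notin>E 3 \<longrightarrow> (w\<in>H 1 \<and> w\<notin>E 1) \<or> (w\<in>H 2 \<and> w\<notin>E 2))"
    and "w\<in>H 1 \<or> w\<in>H 2 \<or> w\<in>H 3 \<or> x {1,2,3} = x {1,2}"
  shows "conj_val E H x {1,2,3} w = conj_val E H x {1,2} w"
  apply (insert spec[OF K4, of w] assms(2))
  unfolding cv vs bx apply (cases "w\<in>H 1"; cases "w\<in>H 2"; cases "w\<in>H 3"; cases "w\<in>E 1"; cases "w\<in>E 2"; cases "w\<in>E 3")
  apply simp_all
  done

lemma pw2:
  assumes K2: "\<forall>w. (w\<in>H 1 \<and> w\<in>E 1 \<longrightarrow> w\<in>H 3 \<and> w\<in>E 3) \<and> (w\<in>H 3 \<and> w\<notin>E 3 \<longrightarrow> w\<in>H 1 \<and> w\<notin>E 1)"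
    and "x {1,3} = x {1}"
    and "w\<in>H 1 \<or> w\<in>H 2 \<or> w\<in>H 3 \<or> x {1,2,3} = x {1,2}"
  shows "conj_val E H x {1,2,3} w = conj_val E H x {1,2} w"
  apply (insert spec[OF K2, of w] assms(2,3))
  unfolding cv vs bx apply (cases "w\<in>H 1"; cases "w\<in>H 2"; cases "w\<in>H 3"; cases "w\<in>E 1"; cases "w\<in>E 2"; cases "w\<in>E 3")
  apply simp_all
  done

lemma pw3:
  assumes K3: "\<forall>w. (w\<in>H 2 \<and> w\<in>E 2 \<longrightarrow> w\<in>H 3 \<and> w\<in>E 3) \<and> (w\<in>H 3 \<and> w\<notin>E 3 \<longrightarrow> w\<in>H 2 \<and> w\<notin>E 2)"
    and "x {2,3} = x {2}"
    and "w\<in>H 1 \<or> w\<in>H 2 \<or> w\<in>H 3 \<or> x {1,2,3} = x {1,2}"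
  shows "conj_val E H x {1,2,3} w = conj_val E H x {1,2} w"
  apply (insert spec[OF K3, of w] assms(2,3))
  unfolding cv vs bx apply (cases "w\<in>H 1"; cases "w\<in>H 2"; cases "w\<in>H 3"; cases "w\<in>E 1"; cases "w\<in>E 2"; cases "w\<in>E 3")
  apply simp_all
  done

lemma pw1:
  assumes K1: "H 3 \<subseteq> E 3"
    and "x {3} = 1" "x {1,3} = x {1}" "x {2,3} = x {2}"
    and "w\<in>H 1 \<or> w\<in>H 2 \<or> w\<in>H 3 \<or> x {1,2,3} = x {1,2}"
  shows "conj_val E H x {1,2,3} w = conj_val E H x {1,2} w"
  apply (insert K1 assms(2-5))
  unfolding cv vs bx apply (cases "w\<in>H 1"; cases "w\<in>H 2"; cases "w\<in>H 3"; cases "w\<in>E 1"; cases "w\<in>E 2"; cases "w\<in>E 3")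
  apply auto
  done

lemma vv12: "w \<notin> H 1 \<Longrightarrow> w \<notin> H 2 \<Longrightarrow> conj_val E H x {1,2} w = x {1,2}"
  unfolding cv vs bx by simp

lemma x123_eq:
  assumes coh: "coherent (iter_family E H x \<mu>)"
    and pw: "\<And>w. w\<in>H 1 \<or> w\<in>H 2 \<or> w\<in>H 3 \<Longrightarrow> conj_val E H x {1,2,3} w = conj_val E H x {1,2} w"
  shows "x {1,2,3} = x {1,2}"
proof -
  have "x {1,2} = x {1,2,3}"
  proof (rule bet2eq[OF coh _ _ _ ifn(4) ifn(7)])
    show "\<forall>w\<in>H 1 \<union> H 2. w \<in> H 1 \<union> H 2 \<union> H 3 \<and> conj_val E H x {1,2} w = conj_val E H x {1,2,3} w"
      using pw by auto
    show "\<forall>w\<in>H 1 \<union> H 2 \<union> H 3 - (H 1 \<union> H 2). conj_val E H x {1, 2, 3} w = x {1, 2}"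
    proof
      fix w assume "w \<in> H 1 \<union> H 2 \<union> H 3 - (H 1 \<union> H 2)"
      then have "w \<notin> H 1" "w \<notin> H 2" "w \<in> H 3" by auto
      then have e1: "conj_val E H x {1, 2, 3} w = conj_val E H x {1, 2} w" using pw[of w] by blast
      have e2: "conj_val E H x {1, 2} w = x {1, 2}" by (rule vv12) fact+
      show "conj_val E H x {1, 2, 3} w = x {1, 2}" using e1 e2 by (rule trans)
    qed
  qed (auto simp: ifn)
  then show ?thesis by simp
qed

lemma iter_from_eq:
  assumes coh: "coherent (iter_family E H x \<mu>)"
    and eq: "\<And>w. conj_val E H x {1,2,3} w = conj_val E H x {1,2} w"
  shows "iter_val E H x \<mu> w = 1"
proof -
  obtain a where a: "a \<in> H 1" "conj_val E H x {1} a \<le> x {1}"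
    using bet1(2)[OF coh _ ifn(1)] by (auto simp: ifn)
  have x1: "x {1} \<ge> 0" using a by (simp only: cv vs bx) (auto split: if_splits)
  obtain b where b: "b \<in> H 2" "conj_val E H x {2} b \<le> x {2}"
    using bet1(2)[OF coh _ ifn(2)] by (auto simp: ifn)
  have x2: "x {2} \<ge> 0" using b by (simp only: cv vs bx) (auto split: if_splits)
  obtain c where c: "c \<in> H 1 \<union> H 2" "conj_val E H x {1,2} c \<le> x {1,2}"
    using bet1(2)[OF coh _ ifn(4)] by (auto simp: ifn)
  have x12: "x {1,2} \<ge> 0" using c x1 x2 by (simp only: cv vs bx) (auto split: if_splits)
  have nn: "conj_val E H x {1,2} v \<ge> 0" for v using x1 x2 x12 by (simp only: cv vs bx) (auto split: if_splits)
  have iv: "iter_val E H x \<mu> v = conj_val E H x {1,2} v + \<mu> * (1 - conj_val E H x {1,2} v)" for v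
    by (simp only: iter_val_def eq)
  obtain p where p: "conj_val E H x {1,2} p \<noteq> 0" "\<mu> \<le> iter_val E H x \<mu> p"
    using bet1(1)[OF coh _ ifn(8)] by (auto simp: ifn)
  obtain q where q: "conj_val E H x {1,2} q \<noteq> 0" "iter_val E H x \<mu> q \<le> \<mu>"
    using bet1(2)[OF coh _ ifn(8)] by (auto simp: ifn)
  have pp: "conj_val E H x {1,2} p > 0" using p(1) nn[of p] by linarith
  have qp: "conj_val E H x {1,2} q > 0" using q(1) nn[of q] by linarith
  have "0 \<le> conj_val E H x {1,2} p * (1 - \<mu>)" using p(2) iv[of p] by (simp add: algebra_simps)
  then have m1: "\<mu> \<le> 1" using pp by (simp add: zero_le_mult_iff)
  have "0 \<le> conj_val E H x {1,2} q * (\<mu> - 1)" using q(2) iv[of q] by (simp add: algebra_simps)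
  then have m2: "\<mu> \<ge> 1" using qp by (simp add: zero_le_mult_iff)
  have "\<mu> = 1" using m1 m2 by simp
  then show ?thesis using iv[of w] by simp
qed


lemma k2a1:
  assumes K: "\<forall>w. (w\<in>H 1 \<and> w\<in>E 1 \<longrightarrow> w\<in>H 3 \<and> w\<in>E 3) \<and> (w\<in>H 3 \<and> w\<notin>E 3 \<longrightarrow> w\<in>H 1 \<and> w\<notin>E 1)" and "w \<in> H 1"
  shows "conj_val E H x {1} w = conj_val E H x {1,3} w"
  apply (insert spec[OF K, of w] assms(2))
  unfolding cv vs bx
  apply (cases "w\<in>H 1"; cases "w\<in>H 2"; cases "w\<in>H 3"; cases "w\<in>E 1"; cases "w\<in>E 2"; cases "w\<in>E 3")
  apply simp_all
  done

lemma k2a2: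
  assumes K: "\<forall>w. (w\<in>H 1 \<and> w\<in>E 1 \<longrightarrow> w\<in>H 3 \<and> w\<in>E 3) \<and> (w\<in>H 3 \<and> w\<notin>E 3 \<longrightarrow> w\<in>H 1 \<and> w\<notin>E 1)" and "w \<in> H 3" and "w \<notin> H 1"
  shows "conj_val E H x {1,3} w = x {1}"
  apply (insert spec[OF K, of w] assms(2) assms(3))
  unfolding cv vs bx
  apply (cases "w\<in>H 1"; cases "w\<in>H 2"; cases "w\<in>H 3"; cases "w\<in>E 1"; cases "w\<in>E 2"; cases "w\<in>E 3")
  apply simp_all
  done

lemma k3a1:
  assumes K: "\<forall>w. (w\<in>H 2 \<and> w\<in>E 2 \<longrightarrow> w\<in>H 3 \<and> w\<in>E 3) \<and> (w\<in>H 3 \<and> w\<notin>E 3 \<longrightarrow> w\<in>H 2 \<and> w\<notin>E 2)" and "w \<in> H 2"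
  shows "conj_val E H x {2} w = conj_val E H x {2,3} w"
  apply (insert spec[OF K, of w] assms(2))
  unfolding cv vs bx
  apply (cases "w\<in>H 1"; cases "w\<in>H 2"; cases "w\<in>H 3"; cases "w\<in>E 1"; cases "w\<in>E 2"; cases "w\<in>E 3")
  apply simp_all
  done

lemma k3a2:
  assumes K: "\<forall>w. (w\<in>H 2 \<and> w\<in>E 2 \<longrightarrow> w\<in>H 3 \<and> w\<in>E 3) \<and> (w\<in>H 3 \<and> w\<notin>E 3 \<longrightarrow> w\<in>H 2 \<and> w\<notin>E 2)" and "w \<in> H 3" and "w \<notin> H 2"
  shows "conj_val E H x {2,3} w = x {2}"
  apply (insert spec[OF K, of w] assms(2) assms(3))
  unfolding cv vs bx
  apply (cases "w\<in>H 1"; cases "w\<in>H 2"; cases "w\<in>H 3"; cases "w\<in>E 1"; cases "w\<in>E 2"; cases "w\<in>E 3")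
  apply simp_all
  done

lemma k1a1:
  assumes K: "H 3 \<subseteq> E 3" and "w \<in> H 3"
  shows "conj_val E H x {3} w = 1"
  apply (insert subsetD[OF K, of w] assms(2))
  unfolding cv vs bx
  apply (cases "w\<in>H 1"; cases "w\<in>H 2"; cases "w\<in>H 3"; cases "w\<in>E 1"; cases "w\<in>E 2"; cases "w\<in>E 3")
  apply simp_all
  done

lemma k1a2:
  assumes K: "H 3 \<subseteq> E 3" and "x {3} = 1" and "w \<in> H 1"
  shows "conj_val E H x {1} w = conj_val E H x {1,3} w"
  apply (insert subsetD[OF K, of w] assms(2) assms(3))
  unfolding cv vs bx
  apply (cases "w\<in>H 1"; cases "w\<in>H 2"; cases "w\<in>H 3"; cases "w\<in>E 1"; cases "w\<in>E 2"; cases "w\<in>E 3")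
  apply simp_all
  done

lemma k1a3:
  assumes K: "H 3 \<subseteq> E 3" and "w \<in> H 3" and "w \<notin> H 1"
  shows "conj_val E H x {1,3} w = x {1}"
  apply (insert subsetD[OF K, of w] assms(2) assms(3))
  unfolding cv vs bx
  apply (cases "w\<in>H 1"; cases "w\<in>H 2"; cases "w\<in>H 3"; cases "w\<in>E 1"; cases "w\<in>E 2"; cases "w\<in>E 3")
  apply simp_all
  done

lemma k1a4:
  assumes K: "H 3 \<subseteq> E 3" and "x {3} = 1" and "w \<in> H 2"
  shows "conj_val E H x {2} w = conj_val E H x {2,3} w"
  apply (insert subsetD[OF K, of w] assms(2) assms(3))
  unfolding cv vs bx
  apply (cases "w\<in>H 1"; cases "w\<in>H 2"; cases "w\<in>H 3"; cases "w\<in>E 1"; cases "w\<in>E 2"; cases "w\<in>E 3")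
  apply simp_all
  done

lemma k1a5:
  assumes K: "H 3 \<subseteq> E 3" and "w \<in> H 3" and "w \<notin> H 2"
  shows "conj_val E H x {2,3} w = x {2}"
  apply (insert subsetD[OF K, of w] assms(2) assms(3))
  unfolding cv vs bx
  apply (cases "w\<in>H 1"; cases "w\<in>H 2"; cases "w\<in>H 3"; cases "w\<in>E 1"; cases "w\<in>E 2"; cases "w\<in>E 3")
  apply simp_all
  done

lemma iterK4:
  assumes coh: "coherent (iter_family E H x \<mu>)"
    and K4: "\<forall>w. ((w\<in>H 1 \<or> w\<in>H 2) \<and> (w\<in>H 1 \<longrightarrow> w\<in>E 1) \<and> (w\<in>H 2 \<longrightarrow> w\<in>E 2) \<longrightarrow> w\<in>H 3 \<and> w\<in>E 3)
      \<and> (w\<in>H 3 \<and> w\<notin>E 3 \<longrightarrow> (w\<in>H 1 \<and> w\<notin>E 1) \<or> (w\<in>H 2 \<and> w\<notin>E 2))"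
  shows "iter_val E H x \<mu> w = 1"
proof -
  have x: "x {1,2,3} = x {1,2}" by (rule x123_eq[OF coh]) (rule pw4[OF K4], blast)
  have eq: "conj_val E H x {1,2,3} v = conj_val E H x {1,2} v" for v by (rule pw4[OF K4]) (intro disjI2, fact x)
  show ?thesis by (rule iter_from_eq[OF coh eq])
qed

lemma iterK2:
  assumes coh: "coherent (iter_family E H x \<mu>)"
    and K2: "\<forall>w. (w\<in>H 1 \<and> w\<in>E 1 \<longrightarrow> w\<in>H 3 \<and> w\<in>E 3) \<and> (w\<in>H 3 \<and> w\<notin>E 3 \<longrightarrow> w\<in>H 1 \<and> w\<notin>E 1)"
  shows "iter_val E H x \<mu> w = 1"
proof -
  have x13: "x {1} = x {1,3}"
  proof (rule bet2eq[OF coh _ _ _ ifn(1) ifn(5)])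
    show "\<forall>w\<in>H 1. w \<in> H 1 \<union> H 3 \<and> conj_val E H x {1} w = conj_val E H x {1,3} w"
      using k2a1[OF K2] by blast
    show "\<forall>w\<in>H 1 \<union> H 3 - H 1. conj_val E H x {1,3} w = x {1}"
      using k2a2[OF K2] by blast
  qed (auto simp: ifn)
  have x: "x {1,2,3} = x {1,2}" by (rule x123_eq[OF coh], rule pw2[OF K2 x13[symmetric]], blast)
  have eq: "conj_val E H x {1,2,3} v = conj_val E H x {1,2} v" for v by (rule pw2[OF K2 x13[symmetric]]) (intro disjI2, fact x)
  show ?thesis by (rule iter_from_eq[OF coh eq])
qed

lemma iterK3:
  assumes coh: "coherent (iter_family E H x \<mu>)"
    and K3: "\<forall>w. (w\<in>H 2 \<and> w\<in>E 2 \<longrightarrow> w\<in>H 3 \<and> w\<in>E 3) \<and> (w\<in>H 3 \<and> w\<notin>E 3 \<longrightarrow> w\<in>H 2 \<and> w\<notin>E 2)"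
  shows "iter_val E H x \<mu> w = 1"
proof -
  have x23: "x {2} = x {2,3}"
  proof (rule bet2eq[OF coh _ _ _ ifn(2) ifn(6)])
    show "\<forall>w\<in>H 2. w \<in> H 2 \<union> H 3 \<and> conj_val E H x {2} w = conj_val E H x {2,3} w"
      using k3a1[OF K3] by blast
    show "\<forall>w\<in>H 2 \<union> H 3 - H 2. conj_val E H x {2,3} w = x {2}"
      using k3a2[OF K3] by blast
  qed (auto simp: ifn)
  have x: "x {1,2,3} = x {1,2}" by (rule x123_eq[OF coh], rule pw3[OF K3 x23[symmetric]], blast)
  have eq: "conj_val E H x {1,2,3} v = conj_val E H x {1,2} v" for v by (rule pw3[OF K3 x23[symmetric]]) (intro disjI2, fact x)
  show ?thesis by (rule iter_from_eq[OF coh eq])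
qed

lemma iterK1:
  assumes coh: "coherent (iter_family E H x \<mu>)"
    and K1: "H 3 \<subseteq> E 3"
  shows "iter_val E H x \<mu> w = 1"
proof -
  obtain a where a: "a \<in> H 3" "conj_val E H x {3} a \<le> x {3}"
    using bet1(2)[OF coh _ ifn(3)] by (auto simp: ifn)
  obtain b where b: "b \<in> H 3" "x {3} \<le> conj_val E H x {3} b"
    using bet1(1)[OF coh _ ifn(3)] by (auto simp: ifn)
  have x3: "x {3} = 1" using a b k1a1[where E=E and H=H and x=x, OF K1 a(1)] k1a1[where E=E and H=H and x=x, OF K1 b(1)] by simp
  have x13: "x {1} = x {1,3}"
  proof (rule bet2eq[OF coh _ _ _ ifn(1) ifn(5)])
    show "\<forall>w\<in>H 1. w \<in> H 1 \<union> H 3 \<and> conj_val E H x {1} w = conj_val E H x {1,3} w"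
      using k1a2[where E=E and H=H and x=x, OF K1 x3] by blast
    show "\<forall>w\<in>H 1 \<union> H 3 - H 1. conj_val E H x {1,3} w = x {1}"
      using k1a3[where E=E and H=H and x=x, OF K1] by blast
  qed (auto simp: ifn)
  have x23: "x {2} = x {2,3}"
  proof (rule bet2eq[OF coh _ _ _ ifn(2) ifn(6)])
    show "\<forall>w\<in>H 2. w \<in> H 2 \<union> H 3 \<and> conj_val E H x {2} w = conj_val E H x {2,3} w"
      using k1a4[where E=E and H=H and x=x, OF K1 x3] by blast
    show "\<forall>w\<in>H 2 \<union> H 3 - H 2. conj_val E H x {2,3} w = x {2}"
      using k1a5[where E=E and H=H and x=x, OF K1] by blast
  qed (auto simp: ifn)
  have x: "x {1,2,3} = x {1,2}" by (rule x123_eq[OF coh], rule pw1[where E=E and H=H and x=x, OF K1 x3 x13[symmetric] x23[symmetric]], blast)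
  have eq: "conj_val E H x {1,2,3} v = conj_val E H x {1,2} v" for v by (rule pw1[where E=E and H=H and x=x, OF K1 x3 x13[symmetric] x23[symmetric]]) (intro disjI2, fact x)
  show ?thesis by (rule iter_from_eq[OF coh eq])
qed


lemma bet2p:
  assumes "coherent F" "a < length F" "b < length F" "a \<noteq> b" "F!a = (X, A, ma)" "F!b = (Y, B, mb)"
  shows "\<exists>w\<in>A \<union> B. 0 \<le> (if w \<in> A then X w - ma else 0) + (if w \<in> B then Y w - mb else 0)"
proof -
  obtain w where w: "w \<in> (\<Union>j\<in>{a,b}. fst (snd (F!j)))"
    "0 \<le> (\<Sum>j\<in>{a,b}. (\<lambda>_. 1) j * (if w \<in> fst (snd (F!j)) then fst (F!j) w - snd (snd (F!j)) else 0))"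
    using coh_ex[OF assms(1), of "{a,b}" "\<lambda>_. 1"] assms(2,3) by blast
  have mem: "w \<in> A \<union> B" using w(1) assms(5,6) by auto
  have eq: "(\<Sum>j\<in>{a,b}. (\<lambda>_. 1) j * (if w \<in> fst (snd (F!j)) then fst (F!j) w - snd (snd (F!j)) else 0))
     = (if w \<in> A then X w - ma else 0) + (if w \<in> B then Y w - mb else 0)"
  proof -
    let ?g = "\<lambda>j. (\<lambda>_. 1) j * (if w \<in> fst (snd (F!j)) then fst (F!j) w - snd (snd (F!j)) else (0::real))"
    have ga: "?g a = (if w \<in> A then X w - ma else 0)" using assms(5) by simp
    have gb: "?g b = (if w \<in> B then Y w - mb else 0)" using assms(6) by simp
    have "sum ?g {a,b} = ?g a + ?g b" using assms(4) by simp
    then show ?thesis using ga gb by linarith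
  qed
  have "0 \<le> (\<Sum>j\<in>{a,b}. (\<lambda>_. 1) j * (if w \<in> fst (snd (F!j)) then fst (F!j) w - snd (snd (F!j)) else 0))" by (fact w(2))
  then have pos: "0 \<le> (if w \<in> A then X w - ma else 0) + (if w \<in> B then Y w - mb else 0)"
    by (simp only: eq)
  show ?thesis by (rule bexI[of _ w]) (fact pos, fact mem)
qed

lemma cevn:
  "[cev A1 B1 p1, cev A2 B2 p2, cev A3 B3 p3] ! 0 = (ind A1, B1, p1)"
  "[cev A1 B1 p1, cev A2 B2 p2, cev A3 B3 p3] ! 1 = (ind A2, B2, p2)"
  "[cev A1 B1 p1, cev A2 B2 p2, cev A3 B3 p3] ! 2 = (ind A3, B3, p3)"
  "length [cev A1 B1 p1, cev A2 B2 p2, cev A3 B3 p3] = 3"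
  "[cev A1 B1 p1, cev A2 B2 p2] ! 0 = (ind A1, B1, p1)"
  "[cev A1 B1 p1, cev A2 B2 p2] ! 1 = (ind A2, B2, p2)"
  "length [cev A1 B1 p1, cev A2 B2 p2] = 2"
  by (simp_all add: cev_def)

lemma pe_coh:
  assumes coh: "coherent [cev (E 1) (H 1) 1, cev (E 2) (H 2) 1, cev (E 3) (H 3) z]"
    and K: "(H 3 \<subseteq> E 3) \<or> (\<forall>w. (w\<in>H 1 \<and> w\<in>E 1 \<longrightarrow> w\<in>H 3 \<and> w\<in>E 3) \<and> (w\<in>H 3 \<and> w\<notin>E 3 \<longrightarrow> w\<in>H 1 \<and> w\<notin>E 1)) \<or> (\<forall>w. (w\<in>H 2 \<and> w\<in>E 2 \<longrightarrow> w\<in>H 3 \<and> w\<in>E 3) \<and> (w\<in>H 3 \<and> w\<notin>E 3 \<longrightarrow> w\<in>H 2 \<and> w\<notin>E 2)) \<or> (\<forall>w. ((w\<in>H 1 \<or> w\<in>H 2) \<and> (w\<in>H 1 \<longrightarrow> w\<in>E 1) \<and> (w\<in>H 2 \<longrightarrow> w\<in>E 2) \<longrightarrow> w\<in>H 3 \<and> w\<in>E 3) \<and> (w\<in>H 3 \<and> w\<notin>E 3 \<longrightarrow> (w\<in>H 1 \<and> w\<notin>E 1) \<or> (w\<in>H 2 \<and> w\<notin>E 2)))"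
  shows "z = 1"
proof -
  have "\<exists>a\<in>H 3. z \<le> ind (E 3) a" by (rule bet1(1)[OF coh _ cevn(3)]) (simp add: cevn(4))
  then obtain a where a: "a\<in>H 3" "z \<le> ind (E 3) a" by blast
  then have z1: "z \<le> 1" by (auto simp: ind_def split: if_splits)
  have "1 \<le> z"
  proof (rule ccontr)
    assume zl: "\<not> 1 \<le> z"
    from K show False
    proof (elim disjE)
      assume K1: "H 3 \<subseteq> E 3"
      have "\<exists>b\<in>H 3. ind (E 3) b \<le> z" by (rule bet1(2)[OF coh _ cevn(3)]) (simp add: cevn(4))
      then obtain b where "b \<in> H 3" "ind (E 3) b \<le> z" by blast
      then show False using K1 zl by (auto simp: ind_def)
    next
      assume K2: "\<forall>w. (w\<in>H 1 \<and> w\<in>E 1 \<longrightarrow> w\<in>H 3 \<and> w\<in>E 3) \<and> (w\<in>H 3 \<and> w\<notin>E 3 \<longrightarrow> w\<in>H 1 \<and> w\<notin>E 1)"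
      have "\<exists>b\<in>H 1 \<union> H 3. 0 \<le> (if b \<in> H 1 then ind (E 1) b - 1 else 0) - (if b \<in> H 3 then ind (E 3) b - z else 0)" by (rule bet2[OF coh _ _ _ cevn(1) cevn(3)]) (simp_all add: cevn(4))
      then obtain b where b: "b \<in> H 1 \<union> H 3" "0 \<le> (if b \<in> H 1 then ind (E 1) b - 1 else 0) - (if b \<in> H 3 then ind (E 3) b - z else 0)" by blast
      show False
        apply (insert spec[OF K2, of b] b zl)
        apply (cases "b\<in>H 1"; cases "b\<in>H 3"; cases "b\<in>E 1"; cases "b\<in>E 3")
        apply (simp_all add: ind_def)
        done
    next
      assume K3: "\<forall>w. (w\<in>H 2 \<and> w\<in>E 2 \<longrightarrow> w\<in>H 3 \<and> w\<in>E 3) \<and> (w\<in>H 3 \<and> w\<notin>E 3 \<longrightarrow> w\<in>H 2 \<and> w\<notin>E 2)"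
      have "\<exists>b\<in>H 2 \<union> H 3. 0 \<le> (if b \<in> H 2 then ind (E 2) b - 1 else 0) - (if b \<in> H 3 then ind (E 3) b - z else 0)" by (rule bet2[OF coh _ _ _ cevn(2) cevn(3)]) (simp_all add: cevn(4))
      then obtain b where b: "b \<in> H 2 \<union> H 3" "0 \<le> (if b \<in> H 2 then ind (E 2) b - 1 else 0) - (if b \<in> H 3 then ind (E 3) b - z else 0)" by blast
      show False
        apply (insert spec[OF K3, of b] b zl)
        apply (cases "b\<in>H 2"; cases "b\<in>H 3"; cases "b\<in>E 2"; cases "b\<in>E 3")
        apply (simp_all add: ind_def)
        done
    next
      assume K4: "\<forall>w. ((w\<in>H 1 \<or> w\<in>H 2) \<and> (w\<in>H 1 \<longrightarrow> w\<in>E 1) \<and> (w\<in>H 2 \<longrightarrow> w\<in>E 2) \<longrightarrow> w\<in>H 3 \<and> w\<in>E 3) \<and> (w\<in>H 3 \<and> w\<notin>E 3 \<longrightarrow> (w\<in>H 1 \<and> w\<notin>E 1) \<or> (w\<in>H 2 \<and> w\<notin>E 2))"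
      have "\<exists>b\<in>H 1 \<union> H 2 \<union> H 3. 0 \<le> (if b \<in> H 1 then ind (E 1) b - 1 else 0) + (if b \<in> H 2 then ind (E 2) b - 1 else 0) - (if b \<in> H 3 then ind (E 3) b - z else 0)" by (rule bet3[OF coh _ _ _ _ _ _ cevn(1) cevn(2) cevn(3)]) (simp_all add: cevn(4))
      then obtain b where b: "b \<in> H 1 \<union> H 2 \<union> H 3" "0 \<le> (if b \<in> H 1 then ind (E 1) b - 1 else 0) + (if b \<in> H 2 then ind (E 2) b - 1 else 0) - (if b \<in> H 3 then ind (E 3) b - z else 0)" by blast
      show False
        apply (insert spec[OF K4, of b] b zl)
        apply (cases "b\<in>H 1"; cases "b\<in>H 2"; cases "b\<in>H 3"; cases "b\<in>E 1"; cases "b\<in>E 2"; cases "b\<in>E 3")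
        apply (simp_all add: ind_def)
        done
    qed
  qed
  with z1 show ?thesis by simp
qed

lemma negK:
  fixes E H :: "nat \<Rightarrow> 'w set"
  assumes pc: "p_consistent [(E 1, H 1), (E 2, H 2)]"
    and n1: "\<not> (H 3 \<subseteq> E 3)" and n2: "\<not> (\<forall>w. (w\<in>H 1 \<and> w\<in>E 1 \<longrightarrow> w\<in>H 3 \<and> w\<in>E 3) \<and> (w\<in>H 3 \<and> w\<notin>E 3 \<longrightarrow> w\<in>H 1 \<and> w\<notin>E 1))" and n3: "\<not> (\<forall>w. (w\<in>H 2 \<and> w\<in>E 2 \<longrightarrow> w\<in>H 3 \<and> w\<in>E 3) \<and> (w\<in>H 3 \<and> w\<notin>E 3 \<longrightarrow> w\<in>H 2 \<and> w\<notin>E 2))" and n4: "\<not> (\<forall>w. ((w\<in>H 1 \<or> w\<in>H 2) \<and> (w\<in>H 1 \<longrightarrow> w\<in>E 1) \<and> (w\<in>H 2 \<longrightarrow> w\<in>E 2) \<longrightarrow> w\<in>H 3 \<and> w\<in>E 3) \<and> (w\<in>H 3 \<and> w\<notin>E 3 \<longrightarrow> (w\<in>H 1 \<and> w\<notin>E 1) \<or> (w\<in>H 2 \<and> w\<notin>E 2)))"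
  shows "\<not> p_entails [(E 1, H 1), (E 2, H 2)] (E 3, H 3) \<and> \<not> iter_cond_eq_one E H"
proof -
  have coh: "coherent [cev (E 1) (H 1) 1, cev (E 2) (H 2) 1]"
    using pc by (simp add: p_consistent_def)
  obtain t1 where t1: "t1 \<in> H 1" "t1 \<in> E 1"
    using bet1(1)[OF coh _ cevn(5)] cevn(7) by (auto simp: ind_def split: if_splits)
  obtain t2 where t2: "t2 \<in> H 2" "t2 \<in> E 2"
    using bet1(1)[OF coh _ cevn(6)] cevn(7) by (auto simp: ind_def split: if_splits)
  obtain g where g0: "g \<in> H 1 \<union> H 2" "0 \<le> (if g \<in> H 1 then ind (E 1) g - 1 else 0) + (if g \<in> H 2 then ind (E 2) g - 1 else 0)"
    using bet2p[OF coh _ _ _ cevn(5) cevn(6)] cevn(7) by auto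
  have g: "g \<in> H 1 \<union> H 2" "g\<in>H 1 \<longrightarrow> g\<in>E 1" "g\<in>H 2\<longrightarrow>g\<in>E 2"
    using g0 by (auto simp: ind_def split: if_splits)
  obtain f where f: "f \<in> H 3" "f \<notin> E 3" using n1 by auto
  obtain w where w: "((w\<in>H 1 \<or> w\<in>H 2) \<and> (w\<in>H 1 \<longrightarrow> w\<in>E 1) \<and> (w\<in>H 2 \<longrightarrow> w\<in>E 2) \<and> \<not> (w\<in>H 3 \<and> w\<in>E 3))
      \<or> (w\<in>H 3 \<and> w\<notin>E 3 \<and> \<not>(w\<in>H 1 \<and> w\<notin>E 1) \<and> \<not> (w\<in>H 2 \<and> w\<notin>E 2))"
    using n4 by blast
  show ?thesis
  proof (cases "w \<in> H 3 \<and> w \<notin> E 3 \<and> (w\<in>H 1 \<longrightarrow> w\<in>E 1) \<and> (w\<in>H 2 \<longrightarrow> w\<in>E 2)")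
    case True
    then have wA: "w\<in>H 3" "w\<notin>E 3" "w\<in>H 1\<longrightarrow>w\<in>E 1" "w\<in>H 2\<longrightarrow>w\<in>E 2" by auto
    show ?thesis
    proof (cases "g \<in> H 2")
      case True
      show ?thesis by (rule constr[OF caseA1[OF wA True _ _ t1] g f]) (use g True in auto)
    next
      case False
      show ?thesis by (rule constr[OF caseA2[OF wA False _ _ t2] g f]) (use g False in auto)
    qed
  next
    case False
    with w have wB: "w\<in>H 1 \<or> w\<in>H 2" "w\<in>H 1 \<longrightarrow> w\<in>E 1" "w\<in>H 2 \<longrightarrow> w\<in>E 2" "w \<notin> H 3" by auto
    show ?thesis
    proof (cases "w \<in> H 1")
      case h1: True
      show ?thesis
      proof (cases "w \<in> H 2")
        case True
        show ?thesis by (rule constr[OF caseB1[where w=w and f=f] g f]) (use wB h1 True f in auto)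
      next
        case h2: False
        obtain u where u: "(u\<in>H 2 \<and> u\<in>E 2 \<and> \<not> (u\<in>H 3 \<and> u\<in>E 3)) \<or> (u\<in>H 3 \<and> u\<notin>E 3 \<and> \<not> (u\<in>H 2 \<and> u\<notin>E 2))"
          using n3 by blast
        show ?thesis
        proof (cases "u \<in> H 3")
          case True
          show ?thesis by (rule constr[OF caseB2b[where w=w and u=u and tb=t2] g f]) (use wB h1 h2 u True t2 in auto)
        next
          case False
          show ?thesis by (rule constr[OF caseB2a[where w=w and u=u and f=f] g f]) (use wB h1 h2 u False f in auto)
        qed
      qed
    next
      case h1: False
      then have h2: "w \<in> H 2" using wB by auto
      obtain u where u: "(u\<in>H 1 \<and> u\<in>E 1 \<and> \<not> (u\<in>H 3 \<and> u\<in>E 3)) \<or> (u\<in>H 3 \<and> u\<notin>E 3 \<and> \<not> (u\<in>H 1 \<and> u\<notin>E 1))"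
        using n2 by blast
      show ?thesis
      proof (cases "u \<in> H 3")
        case True
        show ?thesis by (rule constr[OF caseB3b[where w=w and u=u and ta=t1] g f]) (use wB h1 h2 u True t1 in auto)
      next
        case False
        show ?thesis by (rule constr[OF caseB3a[where w=w and u=u and f=f] g f]) (use wB h1 h2 u False f in auto)
      qed
    qed
  qed
qed

theorem mainTheorem7:
  fixes E H :: "nat \<Rightarrow> 'w set"
  assumes "H 1 \<noteq> {}" and "H 2 \<noteq> {}" and "H 3 \<noteq> {}"
    and "p_consistent [(E 1, H 1), (E 2, H 2)]"
  shows "p_entails [(E 1, H 1), (E 2, H 2)] (E 3, H 3) \<longleftrightarrow> iter_cond_eq_one E H"
proof (cases "(H 3 \<subseteq> E 3) \<or> (\<forall>w. (w\<in>H 1 \<and> w\<in>E 1 \<longrightarrow> w\<in>H 3 \<and> w\<in>E 3) \<and> (w\<in>H 3 \<and> w\<notin>E 3 \<longrightarrow> w\<in>H 1 \<and> w\<notin>E 1)) \<or> (\<forall>w. (w\<in>H 2 \<and> w\<in>E 2 \<longrightarrow> w\<in>H 3 \<and> w\<in>E 3) \<and> (w\<in>H 3 \<and> w\<notin>E 3 \<longrightarrow> w\<in>H 2 \<and> w\<notin>E 2)) \<or> (\<forall>w. ((w\<in>H 1 \<or> w\<in>H 2) \<and> (w\<in>H 1 \<longrightarrow> w\<in>E 1) \<and> (w\<in>H 2 \<longrightarrow> w\<in>E 2) \<longrightarrow> w\<in>H 3 \<and> w\<in>E 3) \<and> (w\<in>H 3 \<and> w\<notin>E 3 \<longrightarrow>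 (w\<in>H 1 \<and> w\<notin>E 1) \<or> (w\<in>H 2 \<and> w\<notin>E 2)))")
  case True
  have pe: "p_entails [(E 1, H 1), (E 2, H 2)] (E 3, H 3)"
    unfolding p_entails_def
  proof (intro conjI allI impI)
    show "p_consistent [(E 1, H 1), (E 2, H 2)]" by (fact assms(4))
    fix z assume "coherent (map (\<lambda>(E, H). cev E H 1) [(E 1, H 1), (E 2, H 2)] @ [cev (fst (E 3, H 3)) (snd (E 3, H 3)) z])"
    then have "coherent [cev (E 1) (H 1) 1, cev (E 2) (H 2) 1, cev (E 3) (H 3) z]" by simp
    then show "z = 1" by (rule pe_coh[OF _ True])
  qed
  have ic: "iter_cond_eq_one E H"
    unfolding iter_cond_eq_one_def
  proof (intro allI impI)
    fix x \<mu> w assume "coherent (iter_family E H x \<mu>) \<and> (\<exists>w. conj_val E H x {1, 2} w \<noteq> 0)"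
    then have coh: "coherent (iter_family E H x \<mu>)" by simp
    from True show "iter_val E H x \<mu> w = 1"
    proof (elim disjE)
      assume k: "H 3 \<subseteq> E 3" show ?thesis by (rule iterK1[OF coh k])
    next
      assume k: "\<forall>w. (w\<in>H 1 \<and> w\<in>E 1 \<longrightarrow> w\<in>H 3 \<and> w\<in>E 3) \<and> (w\<in>H 3 \<and> w\<notin>E 3 \<longrightarrow> w\<in>H 1 \<and> w\<notin>E 1)" show ?thesis by (rule iterK2[OF coh k])
    next
      assume k: "\<forall>w. (w\<in>H 2 \<and> w\<in>E 2 \<longrightarrow> w\<in>H 3 \<and> w\<in>E 3) \<and> (w\<in>H 3 \<and> w\<notin>E 3 \<longrightarrow> w\<in>H 2 \<and> w\<notin>E 2)" show ?thesis by (rule iterK3[OF coh k])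
    next
      assume k: "\<forall>w. ((w\<in>H 1 \<or> w\<in>H 2) \<and> (w\<in>H 1 \<longrightarrow> w\<in>E 1) \<and> (w\<in>H 2 \<longrightarrow> w\<in>E 2) \<longrightarrow> w\<in>H 3 \<and> w\<in>E 3) \<and> (w\<in>H 3 \<and> w\<notin>E 3 \<longrightarrow> (w\<in>H 1 \<and> w\<notin>E 1) \<or> (w\<in>H 2 \<and> w\<notin>E 2))" show ?thesis by (rule iterK4[OF coh k])
    qed
  qed
  from pe ic show ?thesis by simp
next
  case False
  then have "\<not> p_entails [(E 1, H 1), (E 2, H 2)] (E 3, H 3) \<and> \<not> iter_cond_eq_one E H"
    by (intro negK[OF assms(4)]) simp_all
  then show ?thesis by simp
qed

end
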